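(* Let $\epsilon>0$, $E>0$ and $x=(q,p)\in\mathbb{R}^{2d}$ with $p\neq0$. (1) If $V(x)=E$, then for all $\delta>0$, $\mathbb{P}_{x}\big[\sup_{t\in[0,\delta]}V(X^{\epsilon}(t))>E\ \text{and}\ \inf_{t\in[0,\delta]}V(X^{\epsilon}(t))<E\big]=1$. (2) If $z\in\mathbb{R}^{d}$ satisfies $|q-z|^{2}+|p|^{2}=E$, then for all $\delta>0$, $\mathbb{P}_{x}\big[\sup_{t\in[0,\delta]}(|q^{\epsilon}(t)-z|^{2}+|p^{\epsilon}(t)|^{2})>E\ \text{and}\ \inf_{t\in[0,\delta]}(|q^{\epsilon}(t)-z|^{2}+|p^{\epsilon}(t)|^{2})<E\big]=1$.
   Context: Let $d\ge1$, $\gamma>0$, $U\in C^{2}(\mathbb{R}^{d},\mathbb{R})$ a double-well Morse function with $U\ge0$ and, for some $\beta>0$, $\liminf_{|q|\to\infty}\frac{\langle q,\nabla U(q)\rangle}{|q|^{2}+U(q)}>0$ and $\liminf_{|q|\to\infty}(|\nabla U(q)|-\beta\Delta U(q))>0$. For $\epsilon>0$, $X^\epsilon(t)=(q^{\epsilon}(t),p^{\epsilon}(t))$ solves $\mathrm{d}q^{\epsilon}=p^{\epsilon}\mathrm{d}t$, $\mathrm{d}p^{\epsilon}=-\nabla U(q^{\epsilon})\mathrm{d}t-\gamma p^{\epsilon}\mathrm{d}t+\sqrt{2\gamma\epsilon}\,\mathrm{d}B(t)$; $\mathbb{P}_x$ is its law started at $x$. $V(q,p)=U(q)+|p|^2/2$.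 *)

theory Defs
  imports "HOL-Analysis.Analysis" "HOL-Probability.Probability"
begin

definition brownian_motion ::
  "'w measure \<Rightarrow> (real \<Rightarrow> 'w \<Rightarrow> real^'n) \<Rightarrow> bool" where
  "brownian_motion M B \<longleftrightarrow>
     prob_space M \<and>
     (\<forall>t\<ge>0. B t \<in> borel_measurable M) \<and>
     (AE \<omega> in M. B 0 \<omega> = 0 \<and> continuous_on {0..} (\<lambda>t. B t \<omega>)) \<and>
     (\<forall>s t. 0 \<le> s \<and> s < t \<longrightarrow>
        distributed M lborel (\<lambda>\<omega>. B t \<omega> - B s \<omega>)
          (\<lambda>y. ennreal (\<Prod>i\<in>UNIV. normal_density 0 (sqrt (t - s)) (y $ i)))) \<and>
     (\<forall>(ts::nat \<Rightarrow> real) k. 0 \<le> ts 0 \<and> strict_mono ts \<longrightarrow>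
        prob_space.indep_vars M (\<lambda>_. borel) (\<lambda>i \<omega>. B (ts (Suc i)) \<omega> - B (ts i) \<omega>) {..<k})"

definition C2_with :: "(real^'n \<Rightarrow> real) \<Rightarrow> (real^'n \<Rightarrow> real^'n) \<Rightarrow> (real^'n \<Rightarrow> real^'n^'n) \<Rightarrow> bool" where
  "C2_with U gU HU \<longleftrightarrow>
     (\<forall>q. (U has_derivative (\<lambda>h. gU q \<bullet> h)) (at q)) \<and>
     (\<forall>q. (gU has_derivative (\<lambda>h. HU q *v h)) (at q)) \<and>
     continuous_on UNIV HU"

definition laplacian_of :: "(real^'n \<Rightarrow> real^'n^'n) \<Rightarrow> real^'n \<Rightarrow> real" where
  "laplacian_of HU q = (\<Sum>i\<in>UNIV. HU q $ i $ i)"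

definition local_min_pt :: "(real^'n \<Rightarrow> real) \<Rightarrow> real^'n \<Rightarrow> bool" where
  "local_min_pt U m \<longleftrightarrow> (\<exists>e>0. \<forall>y. dist y m < e \<longrightarrow> U m \<le> U y)"

definition double_well_morse :: "(real^'n \<Rightarrow> real) \<Rightarrow> (real^'n \<Rightarrow> real^'n) \<Rightarrow> (real^'n \<Rightarrow> real^'n^'n) \<Rightarrow> bool" where
  "double_well_morse U gU HU \<longleftrightarrow>
     (\<forall>q. gU q = 0 \<longrightarrow> det (HU q) \<noteq> 0) \<and> card {m. local_min_pt U m} = 2"

definition langevin_solution ::
  "'w measure \<Rightarrow> (real^'n \<Rightarrow> real^'n) \<Rightarrow> real \<Rightarrow> real \<Rightarrow> (real \<Rightarrow> 'w \<Rightarrow> real^'n)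
   \<Rightarrow> real^'n \<Rightarrow> real^'n \<Rightarrow> (real \<Rightarrow> 'w \<Rightarrow> real^'n) \<Rightarrow> (real \<Rightarrow> 'w \<Rightarrow> real^'n) \<Rightarrow> bool" where
  "langevin_solution M gU \<gamma> \<epsilon> B q0 p0 q p \<longleftrightarrow>
     (\<forall>t\<ge>0. q t \<in> borel_measurable M \<and> p t \<in> borel_measurable M) \<and>
     (AE \<omega> in M. continuous_on {0..} (\<lambda>t. q t \<omega>) \<and> continuous_on {0..} (\<lambda>t. p t \<omega>) \<and>
        (\<forall>t\<ge>0. q t \<omega> = q0 + integral {0..t} (\<lambda>s. p s \<omega>) \<and>
                p t \<omega> = p0 - integral {0..t} (\<lambda>s. gU (q s \<omega>) + \<gamma> *\<^sub>R p s \<omega>)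
                       + sqrt (2 * \<gamma> * \<epsilon>) *\<^sub>R B t \<omega>))"

end

theory Submission
  imports Defs
begin

lemma bm_prob: "brownian_motion M B \<Longrightarrow> prob_space M"
  by (simp add: brownian_motion_def)

lemma bm_meas: "brownian_motion M B \<Longrightarrow> 0 \<le> t \<Longrightarrow> B t \<in> borel_measurable M"
  by (simp add: brownian_motion_def)

lemma bm_indep:
  fixes B :: "real \<Rightarrow> 'w \<Rightarrow> real^'n"
  assumes bm: "brownian_motion M B"
    and u: "\<And>i. i < m \<Longrightarrow> u i < u (Suc i)" and u0: "0 \<le> u 0"
    and T: "\<And>i. i < m \<Longrightarrow> T i \<in> sets borel" and m: "0 < m"
  shows "measure M (\<Inter>i<m. {\<omega>\<in>space M. B (u (Suc i)) \<omega> - B (u i) \<omega> \<in> T i})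
       = (\<Prod>i<m. measure M {\<omega>\<in>space M. B (u (Suc i)) \<omega> - B (u i) \<omega> \<in> T i})"
proof -
  interpret prob_space M using bm by (simp add: brownian_motion_def)
  define ts where "ts i = (if i \<le> m then u i else u m + real (i - m))" for i
  have "ts i < ts (Suc i)" for i
  proof (cases "Suc i \<le> m")
    case True then show ?thesis using u[of i] by (simp add: ts_def)
  next
    case False then have "i = m \<or> m < i" by linarith
    then show ?thesis by (auto simp: ts_def)
  qed
  hence sm: "strict_mono ts" by (simp add: strict_mono_Suc_iff)
  have "0 \<le> ts 0" using u0 by (simp add: ts_def)
  with sm bm have ind: "indep_vars (\<lambda>_. borel) (\<lambda>i \<omega>. B (ts (Suc i)) \<omega> - B (ts i) \<omega>) {..<m}"
    unfolding brownian_motion_def by blast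
  hence iset: "indep_sets (\<lambda>i. {(\<lambda>\<omega>. B (ts (Suc i)) \<omega> - B (ts i) \<omega>) -` A \<inter> space M | A. A \<in> sets borel}) {..<m}"
    unfolding indep_vars_def2 by blast
  have eq: "\<And>i. i < m \<Longrightarrow> {\<omega>\<in>space M. B (u (Suc i)) \<omega> - B (u i) \<omega> \<in> T i}
      = (\<lambda>\<omega>. B (ts (Suc i)) \<omega> - B (ts i) \<omega>) -` T i \<inter> space M"
    by (auto simp: ts_def)
  have "prob (\<Inter>j\<in>{..<m}. (\<lambda>\<omega>. B (ts (Suc j)) \<omega> - B (ts j) \<omega>) -` T j \<inter> space M)
      = (\<Prod>j\<in>{..<m}. prob ((\<lambda>\<omega>. B (ts (Suc j)) \<omega> - B (ts j) \<omega>) -` T j \<inter> space M))"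
    using iset m T unfolding indep_sets_def
    by (intro iset[unfolded indep_sets_def, THEN conjunct2, rule_format]) (auto simp: Pi_iff)
  moreover have "(\<Inter>i<m. {\<omega>\<in>space M. B (u (Suc i)) \<omega> - B (u i) \<omega> \<in> T i})
     = (\<Inter>j\<in>{..<m}. (\<lambda>\<omega>. B (ts (Suc j)) \<omega> - B (ts j) \<omega>) -` T j \<inter> space M)"
    by (rule INF_cong) (simp_all add: eq)
  moreover have "(\<Prod>i<m. prob {\<omega>\<in>space M. B (u (Suc i)) \<omega> - B (u i) \<omega> \<in> T i})
     = (\<Prod>j\<in>{..<m}. prob ((\<lambda>\<omega>. B (ts (Suc j)) \<omega> - B (ts j) \<omega>) -` T j \<inter> space M))"
    by (rule prod.cong) (simp_all add: eq)
  ultimately show ?thesis by simp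
qed


definition f1 :: "real^'n \<Rightarrow> real" where
  "f1 y = (\<Prod>i\<in>UNIV. normal_density 0 1 (y $ i))"

definition mu1 :: "(real^'n) measure" where
  "mu1 = density lborel (\<lambda>y. ennreal (f1 y))"

lemma nd_scale: "0 < c \<Longrightarrow> normal_density 0 c (c * x) = normal_density 0 1 x / c"
  unfolding normal_density_def
  by (simp add: power_mult_distrib real_sqrt_mult field_simps)

lemma f1_pos: "0 < f1 y"
  unfolding f1_def by (intro prod_pos) (simp add: normal_density_pos)

lemma f1_meas[measurable]: "f1 \<in> borel_measurable borel"
  unfolding f1_def normal_density_def by measurable

lemma bm_scale_emeasure:
  fixes B :: "real \<Rightarrow> 'w \<Rightarrow> real^'n"
  assumes bm: "brownian_motion M B" and s: "0 \<le> s" "s < t" and T: "T \<in> sets borel"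
  shows "emeasure M {\<omega>\<in>space M. (1 / sqrt (t - s)) *\<^sub>R (B t \<omega> - B s \<omega>) \<in> T}
         = emeasure mu1 T"
proof -
  define c where "c = sqrt (t - s)"
  have c: "0 < c" using s by (simp add: c_def)
  define fh where "fh y = ennreal (\<Prod>i\<in>UNIV. normal_density 0 c (y $ i))" for y :: "real^'n"
  have dist: "distributed M lborel (\<lambda>\<omega>. B t \<omega> - B s \<omega>) fh"
    using bm s unfolding brownian_motion_def fh_def c_def by blast
  define T' where "T' = (\<lambda>y. (1/c) *\<^sub>R y) -` T"
  have sm: "(\<lambda>y::real^'n. (1/c) *\<^sub>R y) \<in> borel_measurable borel" by measurable
  have T'[measurable]: "T' \<in> sets borel"
    using measurable_sets[OF sm T] unfolding T'_def by simp
  have "{\<omega>\<in>space M. (1 / c) *\<^sub>R (B t \<omega> - B s \<omega>) \<in> T} = (\<lambda>\<omega>. B t \<omega> - B s \<omega>) -` T' \<inter> space M"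
    by (auto simp: T'_def)
  hence "emeasure M {\<omega>\<in>space M. (1 / c) *\<^sub>R (B t \<omega> - B s \<omega>) \<in> T}
      = emeasure (distr M lborel (\<lambda>\<omega>. B t \<omega> - B s \<omega>)) T'"
    by (subst emeasure_distr) (use dist T' in \<open>auto simp: distributed_def\<close>)
  also have "\<dots> = emeasure (density lborel fh) T'"
    using dist by (simp add: distributed_def)
  also have "\<dots> = (\<integral>\<^sup>+y. fh y * indicator T' y \<partial>lborel)"
    using T' dist by (simp add: emeasure_density distributed_def)
  also have "\<dots> = (\<integral>\<^sup>+x. ennreal (\<bar>c\<bar> ^ DIM(real^'n)) * (fh (0 + c *\<^sub>R x) * indicator T' (0 + c *\<^sub>R x)) \<partial>lborel)"
    using dist
    by (subst lborel_affine[of c 0]) (use c in \<open>auto simp: nn_integral_density nn_integral_distr distributed_def\<close>)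
  also have "\<dots> = (\<integral>\<^sup>+x. ennreal (f1 x) * indicator T x \<partial>lborel)"
  proof (rule nn_integral_cong)
    fix x :: "real^'n"
    have "indicator T' (c *\<^sub>R x) = (indicator T x :: ennreal)"
      using c by (simp add: T'_def indicator_def)
    moreover have "\<bar>c\<bar> ^ DIM(real^'n) * (\<Prod>i\<in>UNIV. normal_density 0 c ((c *\<^sub>R x) $ i)) = f1 x"
    proof -
      have "(\<Prod>i\<in>UNIV. normal_density 0 c ((c *\<^sub>R x) $ i)) = (\<Prod>i\<in>(UNIV::'n set). normal_density 0 1 (x $ i) / c)"
        using c by (simp add: nd_scale)
      also have "\<dots> = f1 x / c ^ CARD('n)"
        by (simp add: f1_def prod_dividef)
      finally show ?thesis using c by simp
    qed
    ultimately show "ennreal (\<bar>c\<bar> ^ DIM(real^'n)) * (fh (0 + c *\<^sub>R x) * indicator T' (0 + c *\<^sub>R x))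
       = ennreal (f1 x) * indicator T x"
      unfolding fh_def using c
      by (simp add: ennreal_mult'[symmetric] mult.assoc[symmetric] del: DIM_cart)
  qed
  also have "\<dots> = emeasure mu1 T"
    unfolding mu1_def using T by (simp add: emeasure_density)
  finally show ?thesis by (simp add: c_def)
qed


lemma bm_scale_measure:
  fixes B :: "real \<Rightarrow> 'w \<Rightarrow> real^'n"
  assumes bm: "brownian_motion M B" and s: "0 \<le> s" "s < t" and T: "T \<in> sets borel"
  shows "measure M {\<omega>\<in>space M. (1 / sqrt (t - s)) *\<^sub>R (B t \<omega> - B s \<omega>) \<in> T}
         = measure mu1 T"
  using bm_scale_emeasure[OF assms] by (simp add: measure_def)

lemma mu1_prob:
  fixes B :: "real \<Rightarrow> 'w \<Rightarrow> real^'n"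
  assumes bm: "brownian_motion M B"
  shows "prob_space (mu1 :: (real^'n) measure)"
proof -
  interpret prob_space M using bm by (simp add: brownian_motion_def)
  have "emeasure (mu1 :: (real^'n) measure) UNIV = emeasure M {\<omega>\<in>space M. (1 / sqrt (1 - 0)) *\<^sub>R (B 1 \<omega> - B 0 \<omega>) \<in> UNIV}"
    using bm_scale_emeasure[OF bm, of 0 1 UNIV] by simp
  also have "\<dots> = 1" using emeasure_space_1 by simp
  finally show ?thesis
    by (intro prob_spaceI) (simp add: mu1_def)
qed

lemma mu1_ball_pos:
  assumes r: "0 < r"
  shows "0 < emeasure (mu1 :: (real^'n) measure) (ball y0 r)"
proof (rule ccontr)
  assume "\<not> 0 < emeasure (mu1 :: (real^'n) measure) (ball y0 r)"
  hence "emeasure (mu1 :: (real^'n) measure) (ball y0 r) = 0" by (simp add: not_gr_zero)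
  hence "(\<integral>\<^sup>+x. ennreal (f1 x) * indicator (ball y0 r) x \<partial>lborel) = 0"
    by (simp add: mu1_def emeasure_density)
  hence "AE x in lborel. ennreal (f1 x) * indicator (ball y0 r) x = 0"
    by (subst (asm) nn_integral_0_iff_AE) (measurable, simp)
  hence "AE x in lborel. x \<notin> ball y0 r"
    by eventually_elim (auto simp: indicator_def ennreal_eq_0_iff, meson f1_pos not_le)
  hence "ball y0 r \<in> null_sets lborel"
    by (subst AE_iff_null_sets) auto
  hence "measure lborel (ball y0 r) = 0" by (simp add: measure_def null_sets_def)
  with content_ball_pos[OF r, of y0] show False by simp
qed

lemma tail_small:
  fixes B :: "real \<Rightarrow> 'w \<Rightarrow> real^'n"
  assumes bm: "brownian_motion M B" and e: "0 < e"
  shows "\<exists>\<Lambda>\<ge>1. measure (mu1 :: (real^'n) measure) {y. \<Lambda> < norm y} < e"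
proof -
  interpret P: prob_space "mu1 :: (real^'n) measure" using mu1_prob[OF bm] .
  define A where "A j = {y::real^'n. real j < norm y}" for j :: nat
  have sets: "range A \<subseteq> sets mu1" by (auto simp: A_def mu1_def)
  have dec: "decseq A" by (auto simp: A_def decseq_def)
  have "(\<lambda>j. measure mu1 (A j)) \<longlonglongrightarrow> measure mu1 (\<Inter>j. A j)"
    by (rule P.finite_Lim_measure_decseq[OF sets dec])
  moreover have "(\<Inter>j. A j) = {}"
  proof -
    have "x \<notin> (\<Inter>j. A j)" for x
    proof -
      obtain j where "norm x < real j" using reals_Archimedean2[of "norm x"] by auto
      hence "x \<notin> A j" by (auto simp: A_def)
      thus ?thesis by blast
    qed
    thus ?thesis by blast
  qed
  ultimately have "(\<lambda>j. measure mu1 (A j)) \<longlonglongrightarrow> 0" by simp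
  hence "eventually (\<lambda>j. measure mu1 (A j) < e \<and> j \<ge> 1) sequentially"
    using e by (intro eventually_conj order_tendstoD(2) eventually_ge_at_top) auto
  then obtain j where j: "measure mu1 (A j) < e" "j \<ge> 1"
    unfolding eventually_sequentially by blast
  then show ?thesis by (intro exI[of _ "real j"]) (auto simp: A_def)
qed

lemma det_incl:
  fixes a D R :: "real^'n"
  assumes s: "0 < s" and aD: "3/4 * s \<le> a \<bullet> D" and nD: "norm D \<le> L * s"
    and nR: "norm R \<le> \<Lambda> * r * s" and ar: "norm a * \<Lambda> * r \<le> 1/4" and r: "0 \<le> r" "r \<le> 1"
    and nK: "n * s * ((L + \<Lambda>)^2 + 1) \<le> 1/4" and n: "0 < n" and L: "0 \<le> L" and La: "0 \<le> \<Lambda>"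
  shows "n * (norm (D + R) ^ 2 + s ^ 2) < a \<bullet> (D + R)"
proof -
  have "\<bar>a \<bullet> R\<bar> \<le> norm a * norm R" by (rule Cauchy_Schwarz_ineq2)
  also have "\<dots> \<le> norm a * (\<Lambda> * r * s)" using nR by (simp add: mult_left_mono)
  also have "\<dots> = (norm a * \<Lambda> * r) * s" by simp
  also have "\<dots> \<le> 1/4 * s" using ar s by (intro mult_right_mono) auto
  finally have aR: "- (1/4 * s) \<le> a \<bullet> R" by linarith
  have "r * s \<le> s" using r s by (simp add: mult_left_le_one_le)
  hence "\<Lambda> * r * s \<le> \<Lambda> * s" using La by (simp add: mult_left_mono mult.assoc)
  hence "norm (D + R) \<le> (L + \<Lambda>) * s" using norm_triangle_ineq[of D R] nD nR by (simp add: algebra_simps)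
  hence "norm (D + R) ^ 2 \<le> ((L + \<Lambda>) * s) ^ 2" by (intro power_mono) auto
  hence "n * (norm (D + R) ^ 2 + s ^ 2) \<le> n * (((L + \<Lambda>) * s) ^ 2 + s ^ 2)"
    using n by (intro mult_left_mono) auto
  also have "\<dots> = (n * s * ((L + \<Lambda>)^2 + 1)) * s" by (simp add: power2_eq_square algebra_simps)
  also have "\<dots> \<le> 1/4 * s" using nK s by (intro mult_right_mono) auto
  also have "\<dots> < a \<bullet> (D + R)" using aD aR s by (simp add: inner_add_right)
  finally show ?thesis .
qed


lemma ev_meas:
  fixes B :: "real \<Rightarrow> 'w \<Rightarrow> real^'n"
  assumes bm: "brownian_motion M B" and "0 \<le> u" "0 \<le> v" and T: "T \<in> sets borel"
  shows "{\<omega>\<in>space M. k *\<^sub>R (B u \<omega> - B v \<omega>) \<in> T} \<in> sets M"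
proof -
  have [measurable]: "B u \<in> borel_measurable M" "B v \<in> borel_measurable M"
    using bm assms by (auto simp: brownian_motion_def)
  have f: "(\<lambda>\<omega>. k *\<^sub>R (B u \<omega> - B v \<omega>)) \<in> borel_measurable M" by measurable
  have "{\<omega>\<in>space M. k *\<^sub>R (B u \<omega> - B v \<omega>) \<in> T} = (\<lambda>\<omega>. k *\<^sub>R (B u \<omega> - B v \<omega>)) -` T \<inter> space M" by auto
  thus ?thesis using measurable_sets[OF f T] by simp
qed

lemma bm_indep_sc:
  fixes B :: "real \<Rightarrow> 'w \<Rightarrow> real^'n"
  assumes bm: "brownian_motion M B"
    and u: "\<And>i. i < m \<Longrightarrow> u i < u (Suc i)" and u0: "0 \<le> u 0"
    and T: "\<And>i. i < m \<Longrightarrow> T i \<in> sets borel" and m: "0 < m"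
  shows "measure M (\<Inter>i<m. {\<omega>\<in>space M. (1 / sqrt (u (Suc i) - u i)) *\<^sub>R (B (u (Suc i)) \<omega> - B (u i) \<omega>) \<in> T i})
       = (\<Prod>i<m. measure (mu1 :: (real^'n) measure) (T i))"
proof -
  define T' where "T' i = (\<lambda>y::real^'n. (1 / sqrt (u (Suc i) - u i)) *\<^sub>R y) -` T i" for i
  have T': "T' i \<in> sets borel" if "i < m" for i
  proof -
    have sm: "(\<lambda>y::real^'n. (1 / sqrt (u (Suc i) - u i)) *\<^sub>R y) \<in> borel_measurable borel" by measurable
    show ?thesis using measurable_sets[OF sm T[OF that]] unfolding T'_def by simp
  qed
  have eq: "{\<omega>\<in>space M. (1 / sqrt (u (Suc i) - u i)) *\<^sub>R (B (u (Suc i)) \<omega> - B (u i) \<omega>) \<in> T i}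
     = {\<omega>\<in>space M. B (u (Suc i)) \<omega> - B (u i) \<omega> \<in> T' i}" for i
    by (auto simp: T'_def)
  have mono: "0 \<le> u i" if "i \<le> m" for i
    using that
  proof (induction i)
    case (Suc i) then show ?case using u[of i] by simp
  qed (use u0 in simp)
  have "measure M (\<Inter>i<m. {\<omega>\<in>space M. B (u (Suc i)) \<omega> - B (u i) \<omega> \<in> T' i})
       = (\<Prod>i<m. measure M {\<omega>\<in>space M. B (u (Suc i)) \<omega> - B (u i) \<omega> \<in> T' i})"
    by (rule bm_indep[OF bm u u0 T' m])
  also have "\<dots> = (\<Prod>i<m. measure (mu1 :: (real^'n) measure) (T i))"
  proof (rule prod.cong)
    fix i assume "i \<in> {..<m}"
    hence i: "i < m" by simp
    show "measure M {\<omega>\<in>space M. B (u (Suc i)) \<omega> - B (u i) \<omega> \<in> T' i} = measure mu1 (T i)"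
      using bm_scale_measure[OF bm mono[of i] u[OF i] T[OF i]] i eq[of i] by simp
  qed simp
  finally show ?thesis by (simp add: eq)
qed

lemma geo_bound:
  fixes c :: real
  assumes "0 \<le> c" "c \<le> 1"
  shows "(\<Sum>j<N. c * (1 - c) ^ j) \<le> 1 - (1 - c) ^ N"
proof (induction N)
  case (Suc N)
  have "(\<Sum>j<Suc N. c * (1 - c) ^ j) = (\<Sum>j<N. c * (1 - c) ^ j) + c * (1 - c) ^ N" by simp
  also have "\<dots> \<le> 1 - (1 - c) ^ N + c * (1 - c) ^ N" using Suc by simp
  also have "\<dots> = 1 - (1 - c) ^ Suc N" by (simp add: algebra_simps)
  finally show ?case .
qed simp

lemma geo_bound2:
  fixes c :: real
  assumes "0 \<le> c" "c \<le> 1"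
  shows "(\<Sum>i\<in>{1..N}. c * (1 - c) ^ (N - i)) \<le> 1"
proof -
  have "(\<Sum>i\<in>{1..N}. c * (1 - c) ^ (N - i)) = (\<Sum>j<N. c * (1 - c) ^ j)"
    by (rule sum.reindex_bij_witness[where i="\<lambda>j. N - j" and j="\<lambda>i. N - i"]) auto
  also have "\<dots> \<le> 1 - (1 - c) ^ N" by (rule geo_bound[OF assms])
  also have "\<dots> \<le> 1" using assms by simp
  finally show ?thesis .
qed


lemma prob_est:
  fixes B :: "real \<Rightarrow> 'w \<Rightarrow> real^'n" and a :: "real^'n"
  assumes bm: "brownian_motion M B" and a: "a \<noteq> 0" and n: "0 < n" and \<delta>: "0 < \<delta>" and e: "0 < e"
  shows "\<exists>N\<in>sets M. {\<omega>\<in>space M. \<not>(\<exists>t. 0 < t \<and> t \<le> \<delta> \<and>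
            n * (norm (B t \<omega> - B 0 \<omega>) ^ 2 + t) < a \<bullet> (B t \<omega> - B 0 \<omega>))} \<subseteq> N
          \<and> measure M N \<le> e"
proof -
  interpret prob_space M using bm by (simp add: brownian_motion_def)
  interpret P: prob_space "mu1 :: (real^'n) measure" using mu1_prob[OF bm] .
  have na: "0 < norm a" using a by simp
  define L where "L = 3 / norm a"
  have L: "0 \<le> L" using na by (simp add: L_def)
  define S :: "(real^'n) set" where "S = {y. 1 \<le> a \<bullet> y \<and> norm y \<le> L}"
  have S[measurable]: "S \<in> sets borel" unfolding S_def by measurable
  define c where "c = measure (mu1 :: (real^'n) measure) S"
  define y0 where "y0 = (2 / norm a ^ 2) *\<^sub>R a"
  have ballS: "ball y0 (1 / norm a) \<subseteq> S"
  proof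
    fix y assume y: "y \<in> ball y0 (1 / norm a)"
    hence d: "norm (y - y0) < 1 / norm a" by (simp add: dist_norm norm_minus_commute)
    have ay0: "a \<bullet> y0 = 2" using na by (simp add: y0_def power2_norm_eq_inner[symmetric])
    have "\<bar>a \<bullet> (y - y0)\<bar> \<le> norm a * norm (y - y0)" by (rule Cauchy_Schwarz_ineq2)
    also have "\<dots> < norm a * (1 / norm a)" using d na by (intro mult_strict_left_mono) auto
    also have "\<dots> = 1" using na by simp
    finally have "1 \<le> a \<bullet> y" using ay0 by (simp add: inner_diff_right)
    moreover have "norm y \<le> L"
    proof -
      have "norm y \<le> norm y0 + norm (y - y0)" by (metis add.commute diff_add_cancel norm_triangle_ineq)
      also have "norm y0 = 2 / norm a" using na by (simp add: y0_def power2_eq_square)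
      finally show ?thesis using d by (simp add: L_def add_divide_distrib[symmetric])
    qed
    ultimately show "y \<in> S" by (simp add: S_def)
  qed
  have c_pos: "0 < c"
  proof -
    have "0 < emeasure (mu1 :: (real^'n) measure) (ball y0 (1 / norm a))" using na by (intro mu1_ball_pos) simp
    also have "\<dots> \<le> emeasure mu1 S" using ballS S by (intro emeasure_mono) (auto simp: mu1_def)
    finally show ?thesis unfolding c_def by (simp add: P.emeasure_eq_measure)
  qed
  have c_le: "c \<le> 1" unfolding c_def by simp
  obtain \<Lambda> where La: "1 \<le> \<Lambda>" and \<theta>: "measure (mu1 :: (real^'n) measure) {y. \<Lambda> < norm y} < e / 2"
    using tail_small[OF bm, of "e/2"] e by auto
  define \<theta> where "\<theta> = measure (mu1 :: (real^'n) measure) {y. \<Lambda> < norm y}"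
  have "(\<lambda>N. (1 - c) ^ N) \<longlonglongrightarrow> 0" using c_pos c_le by (intro LIMSEQ_power_zero) auto
  hence "eventually (\<lambda>N. (1 - c) ^ N < e / 2) sequentially"
    using e by (intro order_tendstoD(2)) auto
  then obtain N where N: "(1 - c) ^ N < e / 2" unfolding eventually_sequentially by blast
  define r where "r = min (1/2) (1 / (4 * norm a * \<Lambda>))"
  have r: "0 < r" "r \<le> 1/2" using na La by (auto simp: r_def)
  have ar: "norm a * \<Lambda> * r \<le> 1/4"
  proof -
    have "r \<le> 1 / (4 * norm a * \<Lambda>)" by (simp add: r_def)
    hence "norm a * \<Lambda> * r \<le> norm a * \<Lambda> * (1 / (4 * norm a * \<Lambda>))"
      using na La by (intro mult_left_mono) auto
    also have "\<dots> = 1/4" using na La by simp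
    finally show ?thesis .
  qed
  define K where "K = (L + \<Lambda>)^2 + 1"
  have K: "1 \<le> K" by (simp add: K_def)
  define \<delta>' where "\<delta>' = min \<delta> ((1 / (4 * n * K))^2)"
  have \<delta>': "0 < \<delta>'" "\<delta>' \<le> \<delta>" using \<delta> n K by (auto simp: \<delta>'_def)
  have sK: "n * sqrt t * K \<le> 1/4" if "0 \<le> t" "t \<le> \<delta>'" for t
  proof -
    have "t \<le> (1 / (4 * n * K))^2" using that by (simp add: \<delta>'_def)
    hence "sqrt t \<le> sqrt ((1 / (4 * n * K))^2)" by (rule real_sqrt_le_mono)
    also have "\<dots> = 1 / (4 * n * K)" using n K by simp
    finally have "n * K * sqrt t \<le> n * K * (1 / (4 * n * K))" using n K by (intro mult_left_mono) auto
    also have "\<dots> = 1/4" using n K by simp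
    finally show ?thesis by (simp add: mult_ac)
  qed
  define w where "w i = (if i = 0 then 0 else \<delta>' * (r^2) ^ (N + 1 - i))" for i :: nat
  have w_pos: "0 < w i" if "1 \<le> i" for i using that \<delta>' r by (simp add: w_def)
  have w_rec: "w i = r^2 * w (Suc i)" if "1 \<le> i" "i \<le> N" for i
  proof -
    have e1: "N + 1 - i = Suc (N - i)" "N + 1 - Suc i = N - i" using that by auto
    have "w i = \<delta>' * (r^2 * (r^2) ^ (N - i))" using that e1 by (simp add: w_def)
    also have "\<dots> = r^2 * (\<delta>' * (r^2) ^ (N - i))" by simp
    also have "\<dots> = r^2 * w (Suc i)" using e1 by (simp add: w_def)
    finally show ?thesis .
  qed
  have w_le: "w i \<le> \<delta>'" if "1 \<le> i" for i
  proof -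
    have "(r^2) ^ (N + 1 - i) \<le> 1" using r by (intro power_le_one) (auto simp: power_le_one)
    thus ?thesis using that \<delta>' by (simp add: w_def mult_left_le)
  qed
  have w_inc: "w i < w (Suc i)" if "i \<le> N" for i
  proof (cases "i = 0")
    case True thus ?thesis using w_pos[of 1] by (simp add: w_def)
  next
    case False
    have "r^2 < 1" using r by (simp add: power_less_one_iff) 
    hence "r^2 * w (Suc i) < 1 * w (Suc i)" using w_pos[of "Suc i"] by (intro mult_strict_right_mono) auto
    thus ?thesis using w_rec[of i] False that by simp
  qed
  define Z where "Z u k \<omega> = (1 / sqrt (u (Suc k) - u k)) *\<^sub>R (B (u (Suc k)) \<omega> - B (u k) \<omega>)"
    for u :: "nat \<Rightarrow> real" and k \<omega>
  define TT0 where "TT0 k = (if k = 0 then UNIV else - S)" for k :: nat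
  define N0 where "N0 = (\<Inter>k<N+1. {\<omega>\<in>space M. Z w k \<omega> \<in> TT0 k})"
  define Tl :: "(real^'n) set" where "Tl = {y. \<Lambda> < norm y}"
  have Tl[measurable]: "Tl \<in> sets borel" unfolding Tl_def by measurable
  define ui where "ui i k = (if k = 0 then 0 else w (i + k - 1))" for i k :: nat
  define TT where "TT k = (if k = 0 then Tl else if k = 1 then S else - S)" for k :: nat
  define LL where "LL i = (\<Inter>k<N + 2 - i. {\<omega>\<in>space M. Z (ui i) k \<omega> \<in> TT k})" for i

  have w_nn: "0 \<le> w i" for i using w_pos[of i] by (cases "i = 0") (auto simp: w_def)
  have ui_nn: "0 \<le> ui i k" for i k using w_nn by (simp add: ui_def)
  have Zmeas: "{\<omega>\<in>space M. Z u k \<omega> \<in> T} \<in> sets M" if "\<And>j. 0 \<le> u j" "T \<in> sets borel" for u k T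
    unfolding Z_def by (rule ev_meas[OF bm]) (use that in auto)
  have TT0[measurable]: "TT0 k \<in> sets borel" for k by (simp add: TT0_def)
  have TT[measurable]: "TT k \<in> sets borel" for k by (simp add: TT_def)
  have N0_ev: "N0 \<in> sets M" unfolding N0_def
    by (intro sets.finite_INT Zmeas w_nn TT0) auto
  have LL_ev: "LL i \<in> sets M" if "i \<le> N" for i unfolding LL_def
    using that by (intro sets.finite_INT Zmeas ui_nn TT) (auto simp: lessThan_empty_iff)
  have mS: "measure (mu1 :: (real^'n) measure) (- S) = 1 - c"
  proof -
    have "- S = space (mu1 :: (real^'n) measure) - S" by (auto simp: mu1_def)
    thus ?thesis using P.prob_compl[of S] S by (simp add: c_def mu1_def)
  qed
  have mU: "measure (mu1 :: (real^'n) measure) UNIV = 1"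
    using P.prob_space by (simp add: mu1_def)
  have N0_meas: "measure M N0 = (1 - c) ^ N"
  proof -
    have "measure M N0 = (\<Prod>k<N+1. measure (mu1 :: (real^'n) measure) (TT0 k))"
      unfolding N0_def Z_def by (rule bm_indep_sc[OF bm]) (use w_inc in \<open>auto simp: w_def\<close>)
    also have "\<dots> = (1 - c) ^ N"
      by (simp only: Suc_eq_plus1[symmetric] prod.lessThan_Suc_shift) (simp add: TT0_def mS mU)
    finally show ?thesis .
  qed
  have LL_meas: "measure M (LL i) = \<theta> * c * (1 - c) ^ (N - i)" if i: "1 \<le> i" "i \<le> N" for i
  proof -
    have "measure M (LL i) = (\<Prod>k<N+2-i. measure (mu1 :: (real^'n) measure) (TT k))"
      unfolding LL_def Z_def
    proof (rule bm_indep_sc[OF bm])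
      fix k assume k: "k < N + 2 - i"
      show "ui i k < ui i (Suc k)"
      proof (cases "k = 0")
        case True thus ?thesis using w_pos[of i] i by (simp add: ui_def)
      next
        case False
        hence "w (i + k - 1) < w (Suc (i + k - 1))" using k i by (intro w_inc) auto
        moreover have "Suc (i + k - 1) = i + Suc k - 1" using False i by simp
        ultimately show ?thesis using False by (simp add: ui_def)
      qed
    qed (use i in \<open>auto simp: ui_def\<close>)
    also have "N + 2 - i = Suc (Suc (N - i))" using i by simp
    also have "(\<Prod>k<Suc (Suc (N - i)). measure (mu1 :: (real^'n) measure) (TT k)) = \<theta> * c * (1 - c) ^ (N - i)"
      by (simp only: prod.lessThan_Suc_shift) (simp add: TT_def mS \<theta>_def Tl_def c_def)
    finally show ?thesis .
  qed
  have ZZ: "Z (ui i) k \<omega> = Z w (i + k - 1) \<omega>" if "1 \<le> k" "1 \<le> i" for i k \<omega>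
  proof -
    have "Suc (i + k - 1) = i + Suc k - 1" using that by simp
    thus ?thesis using that by (simp add: Z_def ui_def)
  qed
  have Z0: "Z (ui i) 0 \<omega> = (1 / sqrt (w i)) *\<^sub>R (B (w i) \<omega> - B 0 \<omega>)" for i \<omega>
    by (simp add: Z_def ui_def)
  define Bad where "Bad = {\<omega>\<in>space M. \<not>(\<exists>t. 0 < t \<and> t \<le> \<delta> \<and>
            n * (norm (B t \<omega> - B 0 \<omega>) ^ 2 + t) < a \<bullet> (B t \<omega> - B 0 \<omega>))}"
  have claim: "Z (ui i) 0 \<omega> \<in> Tl" if \<omega>: "\<omega> \<in> Bad" and i: "1 \<le> i" "i \<le> N" and G: "Z w i \<omega> \<in> S" for \<omega> i
  proof (rule ccontr)
    assume nF: "Z (ui i) 0 \<omega> \<notin> Tl"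
    define t where "t = w (Suc i)"
    define s where "s = sqrt t"
    have t: "0 < t" "t \<le> \<delta>'" using w_pos[of "Suc i"] w_le[of "Suc i"] by (auto simp: t_def)
    have s: "0 < s" using t by (simp add: s_def)
    have wi: "w i = r^2 * t" using w_rec[OF i] by (simp add: t_def)
    define h where "h = w (Suc i) - w i"
    have h: "h = (1 - r^2) * t" by (simp add: h_def wi t_def algebra_simps)
    have "r^2 \<le> (1/2)^2" using r by (intro power_mono) auto
    hence r2: "r^2 \<le> 1/4" by (simp add: power2_eq_square)
    have h_pos: "0 < h" using r2 t by (simp add: h)
    have sqh: "sqrt h = sqrt (1 - r^2) * s" by (simp add: h s_def real_sqrt_mult)
    have "3/4 \<le> sqrt (1 - r^2)" using r2 by (intro real_le_rsqrt) (simp add: power2_eq_square)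
    hence sqh1: "3/4 * s \<le> sqrt h" using s by (simp add: sqh mult_right_mono)
    have "sqrt (1 - r^2) \<le> 1" using r2 by simp
    hence sqh2: "sqrt h \<le> s" using s by (simp add: sqh mult_left_le_one_le)
    define D where "D = B (w (Suc i)) \<omega> - B (w i) \<omega>"
    define R where "R = B (w i) \<omega> - B 0 \<omega>"
    define x where "x = Z w i \<omega>"
    have xD: "x = (1 / sqrt h) *\<^sub>R D" by (simp add: x_def Z_def D_def h_def)
    hence Dx: "D = sqrt h *\<^sub>R x" using h_pos by simp
    have x: "1 \<le> a \<bullet> x" "norm x \<le> L" using G by (auto simp: x_def S_def)
    have "sqrt h * 1 \<le> sqrt h * (a \<bullet> x)" using x h_pos by (intro mult_left_mono) auto
    hence aD: "3/4 * s \<le> a \<bullet> D" using sqh1 by (simp add: Dx)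
    have "norm D = sqrt h * norm x" using h_pos by (simp add: Dx)
    also have "\<dots> \<le> s * L" using x sqh2 h_pos L s by (intro mult_mono) auto
    finally have nD: "norm D \<le> L * s" by (simp add: mult_ac)
    define y where "y = Z (ui i) 0 \<omega>"
    have yR: "y = (1 / sqrt (w i)) *\<^sub>R R" by (simp add: y_def Z0 R_def)
    have wi_pos: "0 < w i" using w_pos i by simp
    hence Ry: "R = sqrt (w i) *\<^sub>R y" using yR by simp
    have ny: "norm y \<le> \<Lambda>" using nF by (simp add: y_def Tl_def)
    have "sqrt (w i) = r * s" using r by (simp add: wi s_def real_sqrt_mult)
    hence "norm R = r * s * norm y" using r s by (simp add: Ry)
    also have "\<dots> \<le> r * s * \<Lambda>" using ny r s by (intro mult_left_mono) auto
    finally have nR: "norm R \<le> \<Lambda> * r * s" by (simp add: mult_ac)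
    have nK: "n * s * ((L + \<Lambda>)^2 + 1) \<le> 1/4" using sK[of t] t by (simp add: s_def K_def)
    have "n * (norm (D + R) ^ 2 + s ^ 2) < a \<bullet> (D + R)"
      by (rule det_incl[OF s aD nD nR ar]) (use r n L La nK in auto)
    moreover have "D + R = B t \<omega> - B 0 \<omega>" by (simp add: D_def R_def t_def)
    moreover have "s^2 = t" using t by (simp add: s_def)
    ultimately have "n * (norm (B t \<omega> - B 0 \<omega>) ^ 2 + t) < a \<bullet> (B t \<omega> - B 0 \<omega>)" by simp
    moreover have "t \<le> \<delta>" using t \<delta>' by simp
    ultimately show False using \<omega> t by (auto simp: Bad_def)
  qed
  have incl: "Bad \<subseteq> N0 \<union> (\<Union>i\<in>{1..N}. LL i)"
  proof
    fix \<omega> assume \<omega>: "\<omega> \<in> Bad"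
    hence sp: "\<omega> \<in> space M" by (simp add: Bad_def)
    show "\<omega> \<in> N0 \<union> (\<Union>i\<in>{1..N}. LL i)"
    proof (cases "\<exists>i\<in>{1..N}. Z w i \<omega> \<in> S")
      case False
      have "\<omega> \<in> N0" unfolding N0_def
      proof (intro InterI, clarsimp simp: sp)
        fix k assume "k < Suc N"
        thus "Z w k \<omega> \<in> TT0 k" using False by (cases "k = 0") (auto simp: TT0_def)
      qed
      thus ?thesis by simp
    next
      case True
      define I where "I = {i\<in>{1..N}. Z w i \<omega> \<in> S}"
      have I: "finite I" "I \<noteq> {}" using True by (auto simp: I_def)
      define i where "i = Max I"
      have iI: "i \<in> I" using I by (simp add: i_def)
      hence i: "1 \<le> i" "i \<le> N" "Z w i \<omega> \<in> S" by (auto simp: I_def)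
      have maxI: "j \<notin> I" if "i < j" for j using Max_ge[OF I(1)] that by (force simp: i_def)
      have memk: "Z (ui i) k \<omega> \<in> TT k" if k: "k < N + 2 - i" for k
        proof (cases "k = 0")
          case True thus ?thesis using claim[OF \<omega> i] by (simp add: TT_def)
        next
          case False
          hence ZZ': "Z (ui i) k \<omega> = Z w (i + k - 1) \<omega>" using ZZ i by simp
          show ?thesis
          proof (cases "k = 1")
            case True thus ?thesis using ZZ' i by (simp add: TT_def)
          next
            case False
            hence "i < i + k - 1" "i + k - 1 \<le> N" "1 \<le> i + k - 1" using \<open>k \<noteq> 0\<close> k i by auto
            hence "Z w (i + k - 1) \<omega> \<notin> S" using maxI[of "i + k - 1"] by (auto simp: I_def)
            thus ?thesis using ZZ' False \<open>k \<noteq> 0\<close> by (simp add: TT_def)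
          qed
        qed
      have "\<omega> \<in> LL i" unfolding LL_def using sp memk by blast
      thus ?thesis using i by auto
    qed
  qed
  have "measure M (N0 \<union> (\<Union>i\<in>{1..N}. LL i)) \<le> measure M N0 + measure M (\<Union>i\<in>{1..N}. LL i)"
    using N0_ev LL_ev by (intro measure_subadditive) (auto simp: emeasure_eq_measure)
  also have "measure M (\<Union>i\<in>{1..N}. LL i) \<le> (\<Sum>i\<in>{1..N}. measure M (LL i))"
    using LL_ev by (intro finite_measure_subadditive_finite) auto
  also have "\<dots> = (\<Sum>i\<in>{1..N}. \<theta> * (c * (1 - c) ^ (N - i)))"
    by (rule sum.cong) (auto simp: LL_meas mult_ac)
  also have "\<dots> = \<theta> * (\<Sum>i\<in>{1..N}. c * (1 - c) ^ (N - i))" by (simp add: sum_distrib_left)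
  also have "\<dots> \<le> \<theta> * 1"
    using geo_bound2[of c N] c_pos c_le by (intro mult_left_mono) (auto simp: \<theta>_def)
  finally have "measure M (N0 \<union> (\<Union>i\<in>{1..N}. LL i)) \<le> e"
    using N0_meas N \<theta> by (simp add: \<theta>_def)
  moreover have "N0 \<union> (\<Union>i\<in>{1..N}. LL i) \<in> sets M" using N0_ev LL_ev by auto
  ultimately show ?thesis using incl unfolding Bad_def by blast
qed


lemma AE_from_small:
  assumes P: "prob_space M"
    and H: "\<And>e. 0 < e \<Longrightarrow> \<exists>N\<in>sets M. {\<omega>\<in>space M. \<not> Q \<omega>} \<subseteq> N \<and> measure M N \<le> e"
  shows "AE \<omega> in M. Q \<omega>"
proof -
  interpret prob_space M by (rule P)
  have "\<forall>j::nat. \<exists>N. N \<in> sets M \<and> {\<omega>\<in>space M. \<not> Q \<omega>} \<subseteq> N \<and> measure M N \<le> 1 / Suc j"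
    using H by (metis of_nat_0_less_iff zero_less_Suc divide_pos_pos zero_less_one)
  then obtain NN where NN: "\<And>j. NN j \<in> sets M" "\<And>j. {\<omega>\<in>space M. \<not> Q \<omega>} \<subseteq> NN j"
      "\<And>j. measure M (NN j) \<le> 1 / Suc j"
    by metis
  define N where "N = (\<Inter>j. NN j)"
  have Nev: "N \<in> sets M" using NN(1) by (auto simp: N_def)
  have le: "measure M N \<le> 1 / Suc j" for j
  proof -
    have "measure M N \<le> measure M (NN j)" using NN(1) by (intro finite_measure_mono) (auto simp: N_def)
    thus ?thesis using NN(3)[of j] by simp
  qed
  have "measure M N \<le> 0"
  proof (rule ccontr)
    assume "\<not> measure M N \<le> 0"
    hence pos: "0 < measure M N" by simp
    then obtain j where "inverse (real (Suc j)) < measure M N" using reals_Archimedean by blast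
    thus False using le[of j] by (simp add: inverse_eq_divide)
  qed
  hence "measure M N = 0" using measure_nonneg[of M N] by linarith
  hence "N \<in> null_sets M" using Nev by (simp add: emeasure_eq_measure null_sets_def)
  moreover have "{\<omega>\<in>space M. \<not> Q \<omega>} \<subseteq> N" using NN(2) by (auto simp: N_def)
  ultimately show ?thesis by (rule AE_I')
qed

lemma osc_AE:
  fixes B :: "real \<Rightarrow> 'w \<Rightarrow> real^'n" and a :: "real^'n"
  assumes bm: "brownian_motion M B" and a: "a \<noteq> 0"
  shows "AE \<omega> in M. \<forall>n::nat. \<forall>m::nat. \<exists>t. 0 < t \<and> t \<le> 1 / Suc m \<and>
            real (Suc n) * (norm (B t \<omega> - B 0 \<omega>) ^ 2 + t) < a \<bullet> (B t \<omega> - B 0 \<omega>)"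
proof -
  have P: "prob_space M" using bm by (simp add: brownian_motion_def)
  show ?thesis
  proof (intro AE_all_countable[THEN iffD2] allI)
    fix n m :: nat
    show "AE \<omega> in M. \<exists>t. 0 < t \<and> t \<le> 1 / Suc m \<and>
            real (Suc n) * (norm (B t \<omega> - B 0 \<omega>) ^ 2 + t) < a \<bullet> (B t \<omega> - B 0 \<omega>)"
      by (rule AE_from_small[OF P], rule prob_est[OF bm a]) auto
  qed
qed

lemma osc_det:
  fixes h :: "real \<Rightarrow> real" and Y :: "real \<Rightarrow> real^'n" and a :: "real^'n"
  assumes cont: "continuous_on {0..\<delta>} h" and \<delta>: "0 < \<delta>" and \<alpha>: "0 < \<alpha>" and T: "0 < T"
    and bound: "\<And>t. 0 < t \<Longrightarrow> t \<le> T \<Longrightarrow> \<bar>h t - E - \<alpha> * (a \<bullet> Y t)\<bar> \<le> K * (norm (Y t) ^ 2 + t)"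
    and op: "\<forall>n::nat. \<forall>m::nat. \<exists>t. 0 < t \<and> t \<le> 1 / Suc m \<and> real (Suc n) * (norm (Y t) ^ 2 + t) < a \<bullet> Y t"
    and om: "\<forall>n::nat. \<forall>m::nat. \<exists>t. 0 < t \<and> t \<le> 1 / Suc m \<and> real (Suc n) * (norm (Y t) ^ 2 + t) < (- a) \<bullet> Y t"
  shows "(SUP t\<in>{0..\<delta>}. h t) > E \<and> (INF t\<in>{0..\<delta>}. h t) < E"
proof -
  have bdd: "bounded (h ` {0..\<delta>})"
    by (intro compact_imp_bounded compact_continuous_image cont compact_Icc)
  obtain n :: nat where n: "K / \<alpha> < real (Suc n)"
    using reals_Archimedean2[of "K / \<alpha>"] by (metis less_trans of_nat_less_iff lessI)
  have nK: "K < \<alpha> * real (Suc n)" using n \<alpha> by (simp add: divide_less_eq mult.commute)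
  obtain m :: nat where m: "1 / Suc m < min \<delta> T"
    using reals_Archimedean[of "min \<delta> T"] \<delta> T by (auto simp: inverse_eq_divide)
  obtain t1 where t1: "0 < t1" "t1 \<le> 1 / Suc m" "real (Suc n) * (norm (Y t1) ^ 2 + t1) < a \<bullet> Y t1"
    using op by blast
  obtain t2 where t2: "0 < t2" "t2 \<le> 1 / Suc m" "real (Suc n) * (norm (Y t2) ^ 2 + t2) < (- a) \<bullet> Y t2"
    using om by blast
  have t1': "t1 \<le> \<delta>" "t1 \<le> T" and t2': "t2 \<le> \<delta>" "t2 \<le> T" using t1 t2 m by auto
  define Q1 where "Q1 = norm (Y t1) ^ 2 + t1"
  define Q2 where "Q2 = norm (Y t2) ^ 2 + t2"
  have Q1: "0 < Q1" using t1 by (simp add: Q1_def add_nonneg_pos)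
  have Q2: "0 < Q2" using t2 by (simp add: Q2_def add_nonneg_pos)
  have b1: "h t1 - E \<ge> \<alpha> * (a \<bullet> Y t1) - K * Q1" using bound[OF t1(1) t1'(2)] by (simp add: Q1_def)
  have "\<alpha> * (real (Suc n) * Q1) < \<alpha> * (a \<bullet> Y t1)" using t1(3) \<alpha> by (simp add: Q1_def)
  moreover have "K * Q1 < \<alpha> * real (Suc n) * Q1" using nK Q1 by simp
  ultimately have "E < h t1" using b1 by (simp add: mult.assoc)
  moreover have "h t1 \<le> (SUP t\<in>{0..\<delta>}. h t)"
    using t1 t1' bdd by (intro cSUP_upper bounded_imp_bdd_above) auto
  ultimately have sup: "(SUP t\<in>{0..\<delta>}. h t) > E" by simp
  have b2: "h t2 - E \<le> \<alpha> * (a \<bullet> Y t2) + K * Q2" using bound[OF t2(1) t2'(2)] by (simp add: Q2_def)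
  have "\<alpha> * (real (Suc n) * Q2) < \<alpha> * (- (a \<bullet> Y t2))"
    using t2(3) \<alpha> unfolding Q2_def by (intro mult_strict_left_mono) auto
  moreover have "K * Q2 < \<alpha> * real (Suc n) * Q2" using nK Q2 by simp
  ultimately have "h t2 < E" using b2 by (simp add: mult.assoc)
  moreover have "(INF t\<in>{0..\<delta>}. h t) \<le> h t2"
    using t2 t2' bdd by (intro cINF_lower bounded_imp_bdd_below) auto
  ultimately have inf: "(INF t\<in>{0..\<delta>}. h t) < E" by simp
  show ?thesis using sup inf by simp
qed


lemma core_p:
  fixes p0 Bv I :: "real^'n"
  assumes I: "norm I \<le> G * t" and t: "0 \<le> t" "t \<le> 1" and G: "0 \<le> G"
  shows "\<bar>norm (p0 + (\<sigma> *\<^sub>R Bv - I)) ^ 2 - norm p0 ^ 2 - 2 * \<sigma> * (p0 \<bullet> Bv)\<bar>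
         \<le> (2 * norm p0 * G + 2 * G^2) * t + 2 * \<sigma>^2 * norm Bv ^ 2"
proof -
  define v where "v = \<sigma> *\<^sub>R Bv - I"
  have e1: "norm (p0 + v) ^ 2 = norm p0 ^ 2 + 2 * (p0 \<bullet> v) + norm v ^ 2"
    by (simp add: power2_norm_eq_inner inner_add_left inner_add_right inner_commute)
  have e2: "p0 \<bullet> v = \<sigma> * (p0 \<bullet> Bv) - p0 \<bullet> I" by (simp add: v_def inner_diff_right)
  have "\<bar>p0 \<bullet> I\<bar> \<le> norm p0 * norm I" by (rule Cauchy_Schwarz_ineq2)
  also have "\<dots> \<le> norm p0 * (G * t)" using I by (intro mult_left_mono) auto
  finally have pI: "\<bar>p0 \<bullet> I\<bar> \<le> norm p0 * G * t" by (simp add: mult_ac)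
  have nv: "norm v \<le> \<bar>\<sigma>\<bar> * norm Bv + norm I"
    using norm_triangle_ineq4[of "\<sigma> *\<^sub>R Bv" I] by (simp add: v_def)
  have "norm v ^ 2 \<le> (\<bar>\<sigma>\<bar> * norm Bv + norm I) ^ 2" using nv by (intro power_mono) auto
  also have "\<dots> \<le> 2 * (\<bar>\<sigma>\<bar> * norm Bv) ^ 2 + 2 * norm I ^ 2"
    using sum_squares_bound[of "\<bar>\<sigma>\<bar> * norm Bv" "norm I"]
    by (simp add: power2_eq_square algebra_simps)
  also have "norm I ^ 2 \<le> (G * t) ^ 2" using I by (intro power_mono) auto
  also have "(G * t) ^ 2 \<le> G^2 * t"
  proof -
    have "t * t \<le> t * 1" using t by (intro mult_left_mono) auto
    hence "G^2 * (t * t) \<le> G^2 * t" by (intro mult_left_mono) auto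
    thus ?thesis by (simp add: power2_eq_square mult_ac)
  qed
  finally have vv: "norm v ^ 2 \<le> 2 * \<sigma>^2 * norm Bv ^ 2 + 2 * G^2 * t"
    by (simp add: power_mult_distrib)
  have "norm (p0 + v) ^ 2 - norm p0 ^ 2 - 2 * \<sigma> * (p0 \<bullet> Bv) = - 2 * (p0 \<bullet> I) + norm v ^ 2"
    using e1 e2 by (simp add: algebra_simps)
  hence "\<bar>norm (p0 + v) ^ 2 - norm p0 ^ 2 - 2 * \<sigma> * (p0 \<bullet> Bv)\<bar> \<le> 2 * \<bar>p0 \<bullet> I\<bar> + norm v ^ 2"
    using abs_triangle_ineq4[of "norm v ^ 2" "2 * (p0 \<bullet> I)"] by (simp add: abs_mult)
  also have "\<dots> \<le> 2 * (norm p0 * G * t) + (2 * \<sigma>^2 * norm Bv ^ 2 + 2 * G^2 * t)"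
    using pI vv by linarith
  finally show ?thesis by (simp add: v_def algebra_simps)
qed

lemma core_q:
  fixes u w :: "real^'n"
  assumes u: "norm u \<le> P * t" and t: "0 \<le> t" "t \<le> 1" and P: "0 \<le> P"
  shows "\<bar>norm (u + w) ^ 2 - norm w ^ 2\<bar> \<le> (2 * P * norm w + P^2) * t"
proof -
  have e: "norm (u + w) ^ 2 - norm w ^ 2 = 2 * (u \<bullet> w) + norm u ^ 2"
    by (simp add: power2_norm_eq_inner inner_add_left inner_add_right inner_commute)
  have "\<bar>u \<bullet> w\<bar> \<le> norm u * norm w" by (rule Cauchy_Schwarz_ineq2)
  also have "\<dots> \<le> P * t * norm w" using u by (intro mult_right_mono) auto
  finally have uw: "\<bar>u \<bullet> w\<bar> \<le> P * norm w * t" by (simp add: mult_ac)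
  have "norm u ^ 2 \<le> (P * t) ^ 2" using u by (intro power_mono) auto
  also have "(P * t) ^ 2 \<le> P^2 * t"
  proof -
    have "t * t \<le> t * 1" using t by (intro mult_left_mono) auto
    hence "P^2 * (t * t) \<le> P^2 * t" by (intro mult_left_mono) auto
    thus ?thesis by (simp add: power2_eq_square mult_ac)
  qed
  finally have uu: "norm u ^ 2 \<le> P^2 * t" .
  have "\<bar>norm (u + w) ^ 2 - norm w ^ 2\<bar> \<le> 2 * \<bar>u \<bullet> w\<bar> + norm u ^ 2"
    using e abs_triangle_ineq[of "2 * (u \<bullet> w)" "norm u ^ 2"] by (simp add: abs_mult)
  also have "\<dots> \<le> 2 * (P * norm w * t) + P^2 * t" using uw uu by linarith
  finally show ?thesis by (simp add: algebra_simps)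
qed


lemma pathwise:
  fixes U :: "real^'n \<Rightarrow> real" and gU :: "real^'n \<Rightarrow> real^'n"
    and Q Pp Bw :: "real \<Rightarrow> real^'n" and q0 p0 :: "real^'n"
  assumes qc: "continuous_on {0..} Q" and pc: "continuous_on {0..} Pp"
    and gUc: "continuous_on UNIV gU"
    and eqs: "\<And>t. 0 \<le> t \<Longrightarrow> Q t = q0 + integral {0..t} Pp \<and>
                Pp t = p0 - integral {0..t} (\<lambda>s. gU (Q s) + \<gamma> *\<^sub>R Pp s) + \<sigma> *\<^sub>R Bw t"
    and \<sigma>: "0 < \<sigma>"
  shows "\<exists>P G. 0 \<le> P \<and> 0 \<le> G \<and> (\<forall>t. 0 \<le> t \<and> t \<le> 1 \<longrightarrow>
            norm (Q t - q0) \<le> P * t \<and>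
            norm (integral {0..t} (\<lambda>s. gU (Q s) + \<gamma> *\<^sub>R Pp s)) \<le> G * t)"
proof -
  have pc1: "continuous_on {0..1} Pp" using pc by (rule continuous_on_subset) auto
  have qc1: "continuous_on {0..1} Q" using qc by (rule continuous_on_subset) auto
  have gc1: "continuous_on {0..1} (\<lambda>s. gU (Q s) + \<gamma> *\<^sub>R Pp s)"
    by (intro continuous_on_add continuous_on_scaleR continuous_on_const pc1
        continuous_on_compose2[OF gUc qc1]) auto
  obtain P where P: "0 < P" "\<And>s. s \<in> {0..1} \<Longrightarrow> norm (Pp s) \<le> P"
    using compact_imp_bounded[OF compact_continuous_image[OF pc1 compact_Icc]]
    unfolding bounded_pos by auto
  obtain G where G: "0 < G" "\<And>s. s \<in> {0..1} \<Longrightarrow> norm (gU (Q s) + \<gamma> *\<^sub>R Pp s) \<le> G"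
    using compact_imp_bounded[OF compact_continuous_image[OF gc1 compact_Icc]]
    unfolding bounded_pos by auto
  have "norm (Q t - q0) \<le> P * t \<and> norm (integral {0..t} (\<lambda>s. gU (Q s) + \<gamma> *\<^sub>R Pp s)) \<le> G * t"
    if t: "0 \<le> t" "t \<le> 1" for t
  proof
    have "norm (integral {0..t} Pp) \<le> P * (t - 0)"
      using t by (intro integral_bound continuous_on_subset[OF pc1] P(2)) auto
    thus "norm (Q t - q0) \<le> P * t" using eqs[OF t(1)] by simp
    have "norm (integral {0..t} (\<lambda>s. gU (Q s) + \<gamma> *\<^sub>R Pp s)) \<le> G * (t - 0)"
      using t by (intro integral_bound continuous_on_subset[OF gc1] G(2)) auto
    thus "norm (integral {0..t} (\<lambda>s. gU (Q s) + \<gamma> *\<^sub>R Pp s)) \<le> G * t" by simp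
  qed
  thus ?thesis using P G by (intro exI[of _ P] exI[of _ G]) auto
qed

lemma part2_path:
  fixes gU :: "real^'n \<Rightarrow> real^'n"
    and Q Pp Bw :: "real \<Rightarrow> real^'n" and q0 p0 z :: "real^'n"
  assumes qc: "continuous_on {0..} Q" and pc: "continuous_on {0..} Pp"
    and gUc: "continuous_on UNIV gU"
    and eqs: "\<And>t. 0 \<le> t \<Longrightarrow> Q t = q0 + integral {0..t} Pp \<and>
                Pp t = p0 - integral {0..t} (\<lambda>s. gU (Q s) + \<gamma> *\<^sub>R Pp s) + \<sigma> *\<^sub>R Bw t"
    and \<sigma>: "0 < \<sigma>" and \<delta>: "0 < \<delta>"
    and op: "\<forall>n::nat. \<forall>m::nat. \<exists>t. 0 < t \<and> t \<le> 1 / Suc m \<and> real (Suc n) * (norm (Bw t) ^ 2 + t) < p0 \<bullet> Bw t"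
    and om: "\<forall>n::nat. \<forall>m::nat. \<exists>t. 0 < t \<and> t \<le> 1 / Suc m \<and> real (Suc n) * (norm (Bw t) ^ 2 + t) < (- p0) \<bullet> Bw t"
    and E: "norm (q0 - z) ^ 2 + norm p0 ^ 2 = E"
  shows "(SUP t\<in>{0..\<delta>}. norm (Q t - z) ^ 2 + norm (Pp t) ^ 2) > E \<and>
         (INF t\<in>{0..\<delta>}. norm (Q t - z) ^ 2 + norm (Pp t) ^ 2) < E"
proof -
  obtain P G where PG: "0 \<le> P" "0 \<le> G" and bnd: "\<And>t. 0 \<le> t \<Longrightarrow> t \<le> 1 \<Longrightarrow>
            norm (Q t - q0) \<le> P * t \<and>
            norm (integral {0..t} (\<lambda>s. gU (Q s) + \<gamma> *\<^sub>R Pp s)) \<le> G * t"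
    using pathwise[OF qc pc gUc eqs \<sigma>] by auto
  define K where "K = 2 * P * norm (q0 - z) + P^2 + 2 * norm p0 * G + 2 * G^2 + 2 * \<sigma>^2"
  show ?thesis
  proof (rule osc_det[where Y = Bw and a = p0 and \<alpha> = "2 * \<sigma>" and T = 1 and K = K])
    show "continuous_on {0..\<delta>} (\<lambda>t. norm (Q t - z) ^ 2 + norm (Pp t) ^ 2)"
      by (intro continuous_on_add continuous_on_power continuous_on_norm continuous_on_diff
          continuous_on_const continuous_on_subset[OF qc] continuous_on_subset[OF pc]) auto
  next
    fix t :: real assume t: "0 < t" "t \<le> 1"
    define I where "I = integral {0..t} (\<lambda>s. gU (Q s) + \<gamma> *\<^sub>R Pp s)"
    have b: "norm (Q t - q0) \<le> P * t" "norm I \<le> G * t" using bnd[of t] t by (auto simp: I_def)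
    have eQ: "Q t - z = (Q t - q0) + (q0 - z)" by simp
    have eP: "Pp t = p0 + (\<sigma> *\<^sub>R Bw t - I)" using eqs[of t] t by (simp add: I_def algebra_simps)
    have c1: "\<bar>norm ((Q t - q0) + (q0 - z)) ^ 2 - norm (q0 - z) ^ 2\<bar> \<le> (2 * P * norm (q0 - z) + P^2) * t"
      by (rule core_q) (use b t PG in auto)
    have c2: "\<bar>norm (p0 + (\<sigma> *\<^sub>R Bw t - I)) ^ 2 - norm p0 ^ 2 - 2 * \<sigma> * (p0 \<bullet> Bw t)\<bar>
         \<le> (2 * norm p0 * G + 2 * G^2) * t + 2 * \<sigma>^2 * norm (Bw t) ^ 2"
      by (rule core_p) (use b t PG in auto)
    have "\<bar>norm (Q t - z) ^ 2 + norm (Pp t) ^ 2 - E - 2 * \<sigma> * (p0 \<bullet> Bw t)\<bar>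
        \<le> (2 * P * norm (q0 - z) + P^2) * t + ((2 * norm p0 * G + 2 * G^2) * t + 2 * \<sigma>^2 * norm (Bw t) ^ 2)"
      using c1 c2 unfolding eQ[symmetric] eP[symmetric] E[symmetric] by linarith
    also have "\<dots> \<le> K * (norm (Bw t) ^ 2 + t)"
    proof -
      have "0 \<le> (2 * P * norm (q0 - z) + P^2 + 2 * norm p0 * G + 2 * G^2) * norm (Bw t) ^ 2"
        using PG by simp
      moreover have "0 \<le> 2 * \<sigma>^2 * t" using t by simp
      ultimately show ?thesis by (simp add: K_def algebra_simps)
    qed
    finally show "\<bar>norm (Q t - z) ^ 2 + norm (Pp t) ^ 2 - E - 2 * \<sigma> * (p0 \<bullet> Bw t)\<bar> \<le> K * (norm (Bw t) ^ 2 + t)" .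
  qed (use \<delta> \<sigma> op om in auto)
qed

lemma part1_path:
  fixes U :: "real^'n \<Rightarrow> real" and gU :: "real^'n \<Rightarrow> real^'n"
    and Q Pp Bw :: "real \<Rightarrow> real^'n" and q0 p0 :: "real^'n"
  assumes qc: "continuous_on {0..} Q" and pc: "continuous_on {0..} Pp"
    and gUc: "continuous_on UNIV gU"
    and Uder: "\<And>x. (U has_derivative (\<lambda>h. gU x \<bullet> h)) (at x)"
    and eqs: "\<And>t. 0 \<le> t \<Longrightarrow> Q t = q0 + integral {0..t} Pp \<and>
                Pp t = p0 - integral {0..t} (\<lambda>s. gU (Q s) + \<gamma> *\<^sub>R Pp s) + \<sigma> *\<^sub>R Bw t"
    and \<sigma>: "0 < \<sigma>" and \<delta>: "0 < \<delta>"
    and op: "\<forall>n::nat. \<forall>m::nat. \<exists>t. 0 < t \<and> t \<le> 1 / Suc m \<and> real (Suc n) * (norm (Bw t) ^ 2 + t) < p0 \<bullet> Bw t"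
    and om: "\<forall>n::nat. \<forall>m::nat. \<exists>t. 0 < t \<and> t \<le> 1 / Suc m \<and> real (Suc n) * (norm (Bw t) ^ 2 + t) < (- p0) \<bullet> Bw t"
    and E: "U q0 + norm p0 ^ 2 / 2 = E"
  shows "(SUP t\<in>{0..\<delta>}. U (Q t) + norm (Pp t) ^ 2 / 2) > E \<and>
         (INF t\<in>{0..\<delta>}. U (Q t) + norm (Pp t) ^ 2 / 2) < E"
proof -
  obtain P G where PG: "0 \<le> P" "0 \<le> G" and bnd: "\<And>t. 0 \<le> t \<Longrightarrow> t \<le> 1 \<Longrightarrow>
            norm (Q t - q0) \<le> P * t \<and>
            norm (integral {0..t} (\<lambda>s. gU (Q s) + \<gamma> *\<^sub>R Pp s)) \<le> G * t"
    using pathwise[OF qc pc gUc eqs \<sigma>] by auto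
  have Uc: "continuous_on UNIV U"
    using Uder by (intro continuous_at_imp_continuous_on ballI has_derivative_continuous) auto
  obtain Lu where Lu: "0 < Lu" "\<And>x. x \<in> cball q0 P \<Longrightarrow> norm (gU x) \<le> Lu"
    using compact_imp_bounded[OF compact_continuous_image[OF continuous_on_subset[OF gUc, of "cball q0 P"] compact_cball]]
    unfolding bounded_pos by auto
  have Ulip: "\<bar>U x - U q0\<bar> \<le> Lu * norm (x - q0)" if x: "x \<in> cball q0 P" for x
  proof -
    have "norm (U x - U q0) \<le> Lu * norm (x - q0)"
    proof (rule differentiable_bound[where S = "cball q0 P" and f' = "\<lambda>x h. gU x \<bullet> h"])
      show "convex (cball q0 P)" by simp
      show "(U has_derivative (\<lambda>h. gU y \<bullet> h)) (at y within cball q0 P)" for y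
        using Uder[of y] by (rule has_derivative_at_withinI)
      show "onorm (\<lambda>h. gU y \<bullet> h) \<le> Lu" if "y \<in> cball q0 P" for y
      proof (rule onorm_le)
        fix h
        have "norm (gU y \<bullet> h) \<le> norm (gU y) * norm h" using Cauchy_Schwarz_ineq2 by simp
        also have "\<dots> \<le> Lu * norm h" using Lu(2)[OF that] by (intro mult_right_mono) auto
        finally show "norm (gU y \<bullet> h) \<le> Lu * norm h" .
      qed
    qed (use x PG in auto)
    thus ?thesis by simp
  qed
  define K where "K = Lu * P + norm p0 * G + G^2 + \<sigma>^2"
  show ?thesis
  proof (rule osc_det[where Y = Bw and a = p0 and \<alpha> = "\<sigma>" and T = 1 and K = K])
    show "continuous_on {0..\<delta>} (\<lambda>t. U (Q t) + norm (Pp t) ^ 2 / 2)"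
      by (intro continuous_on_add continuous_on_power continuous_on_norm continuous_on_divide
          continuous_on_const continuous_on_subset[OF pc]
          continuous_on_compose2[OF Uc continuous_on_subset[OF qc]]) auto
  next
    fix t :: real assume t: "0 < t" "t \<le> 1"
    define I where "I = integral {0..t} (\<lambda>s. gU (Q s) + \<gamma> *\<^sub>R Pp s)"
    have b: "norm (Q t - q0) \<le> P * t" "norm I \<le> G * t" using bnd[of t] t by (auto simp: I_def)
    have "P * t \<le> P * 1" using PG t by (intro mult_left_mono) auto
    hence "Q t \<in> cball q0 P" using b by (simp add: dist_norm norm_minus_commute)
    hence "\<bar>U (Q t) - U q0\<bar> \<le> Lu * norm (Q t - q0)" by (rule Ulip)
    also have "\<dots> \<le> Lu * (P * t)" using b Lu by (intro mult_left_mono) auto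
    finally have c1: "\<bar>U (Q t) - U q0\<bar> \<le> Lu * P * t" by (simp add: mult_ac)
    have eP: "Pp t = p0 + (\<sigma> *\<^sub>R Bw t - I)" using eqs[of t] t by (simp add: I_def algebra_simps)
    have c2: "\<bar>norm (p0 + (\<sigma> *\<^sub>R Bw t - I)) ^ 2 - norm p0 ^ 2 - 2 * \<sigma> * (p0 \<bullet> Bw t)\<bar>
         \<le> (2 * norm p0 * G + 2 * G^2) * t + 2 * \<sigma>^2 * norm (Bw t) ^ 2"
      by (rule core_p) (use b t PG in auto)
    have "\<bar>U (Q t) + norm (Pp t) ^ 2 / 2 - E - \<sigma> * (p0 \<bullet> Bw t)\<bar>
        \<le> Lu * P * t + ((2 * norm p0 * G + 2 * G^2) * t + 2 * \<sigma>^2 * norm (Bw t) ^ 2) / 2"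
    proof -
      define A where "A = U (Q t) - U q0"
      define X where "X = norm (Pp t) ^ 2 - norm p0 ^ 2 - 2 * \<sigma> * (p0 \<bullet> Bw t)"
      have eq: "U (Q t) + norm (Pp t) ^ 2 / 2 - E - \<sigma> * (p0 \<bullet> Bw t) = A + X / 2"
        unfolding A_def X_def E[symmetric] by (simp add: field_simps)
      have c1': "\<bar>A\<bar> \<le> Lu * P * t" using c1 by (simp add: A_def)
      have c2': "\<bar>X\<bar> \<le> (2 * norm p0 * G + 2 * G^2) * t + 2 * \<sigma>^2 * norm (Bw t) ^ 2"
        using c2 by (simp add: X_def eP[symmetric])
      have "\<bar>A + X / 2\<bar> \<le> \<bar>A\<bar> + \<bar>X\<bar> / 2" by arith
      also have "\<dots> \<le> Lu * P * t + ((2 * norm p0 * G + 2 * G^2) * t + 2 * \<sigma>^2 * norm (Bw t) ^ 2) / 2"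
        using c1' c2' by (intro add_mono divide_right_mono) auto
      finally show ?thesis using eq by simp
    qed
    also have "\<dots> \<le> K * (norm (Bw t) ^ 2 + t)"
    proof -
      have "0 \<le> (Lu * P + norm p0 * G + G^2) * norm (Bw t) ^ 2"
        using PG Lu by simp
      moreover have "0 \<le> \<sigma>^2 * t" using t by simp
      ultimately show ?thesis by (simp add: K_def algebra_simps)
    qed
    finally show "\<bar>U (Q t) + norm (Pp t) ^ 2 / 2 - E - \<sigma> * (p0 \<bullet> Bw t)\<bar> \<le> K * (norm (Bw t) ^ 2 + t)" .
  qed (use \<delta> \<sigma> op om in auto)
qed


theorem lemma4p1:
  fixes U :: "real^'n \<Rightarrow> real" and gU :: "real^'n \<Rightarrow> real^'n" and HU :: "real^'n \<Rightarrow> real^'n^'n"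
    and \<gamma> \<beta> \<epsilon> E :: real and q0 p0 :: "real^'n"
    and M :: "'w measure" and B q p :: "real \<Rightarrow> 'w \<Rightarrow> real^'n"
  assumes "\<gamma> > 0" and "\<beta> > 0"
    and "C2_with U gU HU" and "double_well_morse U gU HU" and "\<forall>y. U y \<ge> 0"
    and "\<exists>c>0. eventually (\<lambda>y. (y \<bullet> gU y) / (norm y ^ 2 + U y) \<ge> c) at_infinity"
    and "\<exists>c>0. eventually (\<lambda>y. norm (gU y) - \<beta> * laplacian_of HU y \<ge> c) at_infinity"
    and "\<epsilon> > 0" and "E > 0" and "p0 \<noteq> 0"
    and "brownian_motion M B"
    and "langevin_solution M gU \<gamma> \<epsilon> B q0 p0 q p"
  shows "(U q0 + norm p0 ^ 2 / 2 = E \<longrightarrow>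
            (\<forall>\<delta>>0. AE \<omega> in M.
               (SUP t\<in>{0..\<delta>}. U (q t \<omega>) + norm (p t \<omega>) ^ 2 / 2) > E \<and>
               (INF t\<in>{0..\<delta>}. U (q t \<omega>) + norm (p t \<omega>) ^ 2 / 2) < E))
       \<and> (\<forall>z::real^'n. norm (q0 - z) ^ 2 + norm p0 ^ 2 = E \<longrightarrow>
            (\<forall>\<delta>>0. AE \<omega> in M.
               (SUP t\<in>{0..\<delta>}. norm (q t \<omega> - z) ^ 2 + norm (p t \<omega>) ^ 2) > E \<and>
               (INF t\<in>{0..\<delta>}. norm (q t \<omega> - z) ^ 2 + norm (p t \<omega>) ^ 2) < E))"
proof -
  note ga = assms(1) and C2 = assms(3) and ep = assms(8) and p0 = assms(10)
    and bm = assms(11) and ls = assms(12)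
  define \<sigma> where "\<sigma> = sqrt (2 * \<gamma> * \<epsilon>)"
  have \<sigma>: "0 < \<sigma>" using ga ep by (simp add: \<sigma>_def)
  have Uder: "\<And>x. (U has_derivative (\<lambda>h. gU x \<bullet> h)) (at x)"
    using C2 by (simp add: C2_with_def)
  have gUc: "continuous_on UNIV gU"
  proof -
    have "\<And>x. (gU has_derivative (\<lambda>h. HU x *v h)) (at x)" using C2 by (simp add: C2_with_def)
    thus ?thesis by (intro continuous_at_imp_continuous_on ballI has_derivative_continuous) auto
  qed
  have AEb: "AE \<omega> in M. B 0 \<omega> = 0" using bm unfolding brownian_motion_def
    by (auto elim: AE_mp)
  have AEl: "AE \<omega> in M. continuous_on {0..} (\<lambda>t. q t \<omega>) \<and> continuous_on {0..} (\<lambda>t. p t \<omega>) \<and>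
        (\<forall>t\<ge>0. q t \<omega> = q0 + integral {0..t} (\<lambda>s. p s \<omega>) \<and>
                p t \<omega> = p0 - integral {0..t} (\<lambda>s. gU (q s \<omega>) + \<gamma> *\<^sub>R p s \<omega>)
                       + \<sigma> *\<^sub>R B t \<omega>)"
    using ls unfolding langevin_solution_def \<sigma>_def by blast
  have AEp: "AE \<omega> in M. \<forall>n::nat. \<forall>m::nat. \<exists>t. 0 < t \<and> t \<le> 1 / Suc m \<and>
            real (Suc n) * (norm (B t \<omega> - B 0 \<omega>) ^ 2 + t) < p0 \<bullet> (B t \<omega> - B 0 \<omega>)"
    by (rule osc_AE[OF bm p0])
  have AEm: "AE \<omega> in M. \<forall>n::nat. \<forall>m::nat. \<exists>t. 0 < t \<and> t \<le> 1 / Suc m \<and>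
            real (Suc n) * (norm (B t \<omega> - B 0 \<omega>) ^ 2 + t) < (- p0) \<bullet> (B t \<omega> - B 0 \<omega>)"
    by (rule osc_AE[OF bm]) (use p0 in simp)
  show ?thesis
  proof (intro conjI impI allI)
    fix \<delta> :: real assume E: "U q0 + norm p0 ^ 2 / 2 = E" and \<delta>: "0 < \<delta>"
    show "AE \<omega> in M. (SUP t\<in>{0..\<delta>}. U (q t \<omega>) + norm (p t \<omega>) ^ 2 / 2) > E \<and>
               (INF t\<in>{0..\<delta>}. U (q t \<omega>) + norm (p t \<omega>) ^ 2 / 2) < E"
      using AEb AEl AEp AEm
    proof eventually_elim
      case (elim \<omega>)
      show ?case
        by (rule part1_path[where Bw = "\<lambda>t. B t \<omega>" and \<gamma> = \<gamma> and \<sigma> = \<sigma>])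
          (use elim \<sigma> \<delta> E Uder gUc in auto)
    qed
  next
    fix z :: "real^'n" and \<delta> :: real assume E: "norm (q0 - z) ^ 2 + norm p0 ^ 2 = E" and \<delta>: "0 < \<delta>"
    show "AE \<omega> in M. (SUP t\<in>{0..\<delta>}. norm (q t \<omega> - z) ^ 2 + norm (p t \<omega>) ^ 2) > E \<and>
               (INF t\<in>{0..\<delta>}. norm (q t \<omega> - z) ^ 2 + norm (p t \<omega>) ^ 2) < E"
      using AEb AEl AEp AEm
    proof eventually_elim
      case (elim \<omega>)
      show ?case
        by (rule part2_path[where Bw = "\<lambda>t. B t \<omega>" and \<gamma> = \<gamma> and \<sigma> = \<sigma> and gU = gU])
          (use elim \<sigma> \<delta> E gUc in auto)
    qed
  qed
qed


end
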